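(* Let $\mathcal{E}$ be an ellipse in a Euclidean plane, let $c$ be a chord of $\mathcal{E}$, and let $g$ be an affine bijection of the plane. Consider the three properties: (1) a chord of $\mathcal{E}$ parallel to $c$ and passing through a focus of $\mathcal{E}$ is sent by $g$ onto a chord of $g(\mathcal{E})$ passing through a focus of $g(\mathcal{E})$; (2) the length of $c$ is preserved, i.e. $g(c)$ has the same length as $c$; (3) the length of the major axis is preserved, i.e. $g(\mathcal{E})$ has the same major axis length as $\mathcal{E}$. Then any two of these three properties imply the remaining one. *)

theory Defs
  imports "HOL-Analysis.Analysis"
begin

text \<open>Circles (F1 = F2) are included.\<close>

definition ellipse :: "real^2 \<Rightarrow> real^2 \<Rightarrow> real \<Rightarrow> (real^2) set" where
  "ellipse F1 F2 l = {x. dist x F1 + dist x F2 = l}"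

definition is_ellipse :: "(real^2) set \<Rightarrow> bool" where
  "is_ellipse S \<longleftrightarrow> (\<exists>F1 F2 l. dist F1 F2 < l \<and> S = ellipse F1 F2 l)"

definition is_focus :: "(real^2) set \<Rightarrow> real^2 \<Rightarrow> bool" where
  "is_focus S F \<longleftrightarrow> (\<exists>F' l. dist F F' < l \<and> S = ellipse F F' l)"

definition major_axis_length :: "(real^2) set \<Rightarrow> real" where
  "major_axis_length S = (THE l. \<exists>F1 F2. dist F1 F2 < l \<and> S = ellipse F1 F2 l)"

definition is_chord :: "(real^2) set \<Rightarrow> real^2 \<Rightarrow> real^2 \<Rightarrow> bool" where
  "is_chord S p q \<longleftrightarrow> p \<in> S \<and> q \<in> S \<and> p \<noteq> q"

definition affine_bijection :: "(real^2 \<Rightarrow> real^2) \<Rightarrow> bool" where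
  "affine_bijection g \<longleftrightarrow> (\<exists>f b. linear f \<and> bij f \<and> g = (\<lambda>x. f x + b))"

end

theory Submission
  imports Defs
begin


definition cr :: "real^2 \<Rightarrow> real^2 \<Rightarrow> real" where "cr w z = w$1*z$2 - w$2*z$1"
definition Qf :: "real \<Rightarrow> real^2 \<Rightarrow> real^2 \<Rightarrow> real" where "Qf a e y = a^2*(y \<bullet> y) - (e \<bullet> y)^2"

lemma inner2: "(x::real^2) \<bullet> y = x$1*y$1 + x$2*y$2" by (simp add: inner_vec_def sum_2)

lemma lagr: "(e \<bullet> w)^2 + (cr w e)^2 = (e \<bullet> e)*(w \<bullet> w)"
  by (simp add: inner2 cr_def power2_eq_square algebra_simps)

lemma gram: "(a^2*(z \<bullet> w) - (e \<bullet> z)*(e \<bullet> w))^2 - Qf a e w * Qf a e z = -(a^2*(a^2 - e \<bullet> e)*(cr w z)^2)"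
  by (simp add: Qf_def inner2 cr_def power2_eq_square algebra_simps)

lemma EQ:
  assumes "norm e < a"
  shows "x \<in> ellipse (c - e) (c + e) (2*a) \<longleftrightarrow> Qf a e (x - c) = a^2*(a^2 - e \<bullet> e)"
proof -
  define y where "y = x - c"
  define s where "s = norm (y + e)"
  define t where "t = norm (y - e)"
  define k where "k = y \<bullet> e"
  define n where "n = y \<bullet> y"
  define m where "m = e \<bullet> e"
  have a0: "a > 0" using assms norm_ge_zero[of e] by linarith
  have s0: "s \<ge> 0" "t \<ge> 0" by (auto simp: s_def t_def)
  have s2: "s^2 = n + 2*k + m" unfolding s_def n_def k_def m_def
    by (simp add: power2_norm_eq_inner inner_add inner_commute)
  have t2: "t^2 = n - 2*k + m" unfolding t_def n_def k_def m_def
    by (simp add: power2_norm_eq_inner inner_diff inner_commute)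
  have cs: "k^2 \<le> m * n"
  proof -
    have "\<bar>k\<bar> \<le> norm y * norm e" unfolding k_def by (rule Cauchy_Schwarz_ineq2)
    hence "k^2 \<le> (norm y * norm e)^2" by (metis abs_ge_zero power2_abs power_mono)
    thus ?thesis by (simp add: m_def n_def power_mult_distrib power2_norm_eq_inner mult.commute)
  qed
  have m0: "m \<ge> 0" "m < a^2" unfolding m_def
    using assms by (auto simp: power2_norm_eq_inner[symmetric] intro!: power_strict_mono)
  have de: "dist x (c - e) + dist x (c + e) = s + t"
    by (simp add: s_def t_def y_def dist_norm algebra_simps)
  have Qe: "Qf a e (x - c) = a^2*n - k^2"
    by (simp add: Qf_def y_def[symmetric] n_def k_def inner_commute)
  show ?thesis
  proof
    assume "x \<in> ellipse (c - e) (c + e) (2*a)"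
    hence st: "s + t = 2*a" using de by (simp add: ellipse_def)
    have "(s - t)*(s+t) = 4*k" using s2 t2 by (simp add: algebra_simps power2_eq_square)
    hence "s - t = 2*k/a" using st a0 by (simp add: field_simps)
    hence "s = a + k/a" using st by (simp add: field_simps)
    hence "(a + k/a)^2 = n + 2*k + m" using s2 by simp
    hence "a^2*(a + k/a)^2 = a^2*(n + 2*k + m)" by simp
    moreover have "a^2*(a + k/a)^2 = (a^2 + k)^2" using a0 by (simp add: field_simps power2_eq_square)
    ultimately have "(a^2+k)^2 = a^2*(n+2*k+m)" by simp
    thus "Qf a e (x - c) = a^2*(a^2 - e \<bullet> e)" unfolding Qe m_def[symmetric]
      by (simp add: algebra_simps power2_eq_square)
  next
    assume "Qf a e (x - c) = a^2*(a^2 - e \<bullet> e)"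
    hence eq: "a^2*n - k^2 = a^2*(a^2 - m)" using Qe m_def by simp
    have "(a^2 - m)*n \<le> a^2*(a^2-m)" using eq cs by (simp add: algebra_simps)
    hence nle: "n \<le> a^2" using m0 by simp
    have "k^2 \<le> m * n" by (rule cs)
    also have "\<dots> < a^2 * a^2"
    proof -
      have "m*n \<le> m * a^2" using nle m0 by (simp add: mult_left_mono)
      also have "\<dots> < a^2*a^2" using mult_strict_right_mono[OF m0(2), of "a^2"] a0 by simp
      finally show ?thesis .
    qed
    finally have "k^2 < (a^2)^2" by (simp add: power2_eq_square)
    hence kb: "\<bar>k\<bar> < a^2" using a0 by (metis abs_power2 power2_less_imp_less zero_le_power2 abs_ge_zero power2_abs)
    have p1: "a + k/a \<ge> 0" "a - k/a \<ge> 0" using kb a0 by (auto simp: field_simps abs_less_iff power2_eq_square)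
    have "(a + k/a)^2 = n + 2*k + m" "(a - k/a)^2 = n - 2*k + m"
      using eq a0 by (auto simp: field_simps power2_eq_square)
    hence "s = a + k/a" "t = a - k/a" using s2 t2 s0 p1 by (auto intro: power2_eq_imp_eq)
    hence "s + t = 2*a" by simp
    thus "x \<in> ellipse (c - e) (c + e) (2*a)" using de by (simp add: ellipse_def)
  qed
qed

lemma diam:
  assumes "x \<in> ellipse F1 F2 l" "y \<in> ellipse F1 F2 l"
  shows "dist x y \<le> l"
proof -
  have "dist x y \<le> dist x F1 + dist F1 y" "dist x y \<le> dist x F2 + dist F2 y"
    by (rule dist_triangle)+
  thus ?thesis using assms by (simp add: ellipse_def dist_commute)
qed

lemma perp_ex:
  fixes u :: "real^2"
  assumes "u \<bullet> u = 1"
  shows "\<exists>w. w \<bullet> w = 1 \<and> w \<bullet> u = 0"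
  apply (rule exI[of _ "vector [-(u$2), u$1]"])
  using assms by (simp add: inner2 algebra_simps)

lemma unit_dir:
  fixes e :: "real^2"
  shows "\<exists>u. u \<bullet> u = 1 \<and> e = (e \<bullet> u) *\<^sub>R u \<and> (e \<bullet> u)^2 = e \<bullet> e"
proof (cases "e = 0")
  case True
  show ?thesis
    apply (rule exI[of _ "axis 1 1"]) using True by (simp add: inner_axis_axis)
next
  case False
  define u where "u = (1 / norm e) *\<^sub>R e"
  have n: "norm e > 0" using False by simp
  have uu: "u \<bullet> u = 1" using n by (simp add: u_def power2_norm_eq_inner[symmetric] power2_eq_square)
  have eu: "e \<bullet> u = norm e" using n by (simp add: u_def power2_norm_eq_inner[symmetric] power2_eq_square)
  show ?thesis
    apply (rule exI[of _ u]) using uu eu n by (simp add: u_def power2_norm_eq_inner)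
qed

lemma vertex_in:
  assumes "norm e < a" "u \<bullet> u = 1" "(e \<bullet> u)^2 = e \<bullet> e"
  shows "c + a *\<^sub>R u \<in> ellipse (c - e) (c + e) (2*a)" "c - a *\<^sub>R u \<in> ellipse (c - e) (c + e) (2*a)"
   apply (subst EQ[OF assms(1)], use assms in \<open>simp add: Qf_def inner_commute power_mult_distrib algebra_simps power2_eq_square\<close>)
  apply (subst EQ[OF assms(1)], use assms in \<open>simp add: Qf_def inner_commute power_mult_distrib algebra_simps power2_eq_square\<close>)
  done

lemma same_a:
  assumes "norm e < a" "norm e2 < a2"
    and S: "ellipse (c-e) (c+e) (2*a) = ellipse (c2-e2) (c2+e2) (2*a2)"
  shows "a \<le> a2"
proof -
  obtain u where u: "u \<bullet> u = 1" "(e \<bullet> u)^2 = e \<bullet> e" using unit_dir by blast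
  have a0: "a > 0" using assms(1) norm_ge_zero[of e] by linarith
  have "dist (c + a *\<^sub>R u) (c - a *\<^sub>R u) \<le> 2*a2"
    using vertex_in[OF assms(1) u] S diam by metis
  moreover have "dist (c + a *\<^sub>R u) (c - a *\<^sub>R u) = 2*a"
  proof -
    have "norm u = 1" using u(1) by (simp add: norm_eq_sqrt_inner)
    hence "norm ((2*a) *\<^sub>R u) = 2*a" using a0 by simp
    thus ?thesis by (simp add: dist_norm algebra_simps scaleR_2[symmetric])
  qed
  ultimately show ?thesis by simp
qed

lemma seg_param:
  fixes V1 V2 F c u :: "real^2"
  assumes "dist V1 V2 = dist V1 F + dist F V2" "V1 = c + a *\<^sub>R u" "V2 = c - a *\<^sub>R u"
  shows "\<exists>t. 0 \<le> t \<and> t \<le> 1 \<and> F = c + ((1 - 2*t)*a) *\<^sub>R u"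
proof -
  have "between (V1, V2) F" using assms(1) by (simp add: between)
  hence "F \<in> closed_segment V1 V2" by (simp add: between_mem_segment)
  then obtain t where t: "0 \<le> t" "t \<le> 1" "F = (1 - t) *\<^sub>R V1 + t *\<^sub>R V2" by (auto simp: in_segment)
  have "F = c + ((1 - 2*t)*a) *\<^sub>R u" using t(3) assms(2,3) by (simp add: vec_eq_iff forall_2 algebra_simps)
  thus ?thesis using t by blast
qed

lemma same_c:
  assumes "norm e < a" "norm e2 < a"
    and S: "ellipse (c-e) (c+e) (2*a) = ellipse (c2-e2) (c2+e2) (2*a)"
  shows "c2 = c"
proof -
  obtain u where u: "u \<bullet> u = 1" "(e \<bullet> u)^2 = e \<bullet> e" using unit_dir by blast
  have a0: "a > 0" using assms(1) norm_ge_zero[of e] by linarith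
  have nu: "norm u = 1" using u(1) by (simp add: norm_eq_sqrt_inner)
  define V1 where "V1 = c + a *\<^sub>R u"
  define V2 where "V2 = c - a *\<^sub>R u"
  define F1 where "F1 = c2 - e2"
  define F2 where "F2 = c2 + e2"
  have "V1 \<in> ellipse F1 F2 (2*a)" using vertex_in(1)[OF assms(1) u, of c] S
    by (simp add: V1_def F1_def F2_def)
  hence m1: "dist V1 F1 + dist V1 F2 = 2*a" by (simp add: ellipse_def)
  have "V2 \<in> ellipse F1 F2 (2*a)" using vertex_in(2)[OF assms(1) u, of c] S
    by (simp add: V2_def F1_def F2_def)
  hence m2: "dist V2 F1 + dist V2 F2 = 2*a" by (simp add: ellipse_def)
  have dV: "dist V1 V2 = 2*a"
  proof -
    have "norm ((2*a) *\<^sub>R u) = 2*a" using a0 nu by simp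
    thus ?thesis by (simp add: V1_def V2_def dist_norm algebra_simps scaleR_2[symmetric])
  qed
  have tr: "dist V1 V2 \<le> dist V1 F1 + dist F1 V2" "dist V1 V2 \<le> dist V1 F2 + dist F2 V2"
    by (rule dist_triangle)+
  have e1: "dist V1 V2 = dist V1 F1 + dist F1 V2" and e2: "dist V1 V2 = dist V1 F2 + dist F2 V2"
    using tr m1 m2 dV by (simp_all add: dist_commute)
  obtain t where t: "0 \<le> t" "t \<le> 1" "F1 = c + ((1 - 2*t)*a) *\<^sub>R u"
    using seg_param[OF e1 V1_def V2_def] by blast
  obtain t' where t': "0 \<le> t'" "t' \<le> 1" "F2 = c + ((1 - 2*t')*a) *\<^sub>R u"
    using seg_param[OF e2 V1_def V2_def] by blast
  have "dist V1 F1 = norm ((2*t*a) *\<^sub>R u)" by (simp add: V1_def t(3) dist_norm algebra_simps)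
  hence d1: "dist V1 F1 = 2*t*a" using nu t a0 by simp
  have "dist V1 F2 = norm ((2*t'*a) *\<^sub>R u)" by (simp add: V1_def t'(3) dist_norm algebra_simps)
  hence d2: "dist V1 F2 = 2*t'*a" using nu t' a0 by simp
  have "2*t*a + 2*t'*a = 2*a" using m1 d1 d2 by simp
  hence "(2*a)*(t + t') = (2*a)*1" by (simp add: algebra_simps)
  hence tt: "t + t' = 1" using a0 by (subst (asm) mult_left_cancel) auto
  have "F1 + F2 = 2 *\<^sub>R c + ((2 - 2*(t+t'))*a) *\<^sub>R u" using t(3) t'(3) by (simp add: vec_eq_iff forall_2 algebra_simps)
  hence "F1 + F2 = 2 *\<^sub>R c" using tt by simp
  moreover have "F1 + F2 = 2 *\<^sub>R c2" by (simp add: F1_def F2_def scaleR_2)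
  ultimately show ?thesis by simp
qed

lemma same_e:
  assumes "norm e < a" "norm e2 < a" "e \<noteq> 0"
    and S: "ellipse (c-e) (c+e) (2*a) = ellipse (c-e2) (c+e2) (2*a)"
  shows "e2 = e \<or> e2 = -e"
proof -
  have a0: "a > 0" using assms(1) norm_ge_zero[of e] by linarith
  have Q: "Qf a e y = a^2*(a^2 - e \<bullet> e) \<longleftrightarrow> Qf a e2 y = a^2*(a^2 - e2 \<bullet> e2)" for y
    using EQ[OF assms(1), of "c + y" c] EQ[OF assms(2), of "c + y" c] S by simp
  obtain u where u: "u \<bullet> u = 1" "e = (e \<bullet> u) *\<^sub>R u" "(e \<bullet> u)^2 = e \<bullet> e" using unit_dir by blast
  obtain w where w: "w \<bullet> w = 1" "w \<bullet> u = 0" using perp_ex[OF u(1)] by blast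
  have "Qf a e (a *\<^sub>R u) = a^2*(a^2 - e \<bullet> e)" using u by (simp add: Qf_def power_mult_distrib power2_eq_square algebra_simps)
  hence "Qf a e2 (a *\<^sub>R u) = a^2*(a^2 - e2 \<bullet> e2)" using Q by blast
  hence "a^2 * (e2 \<bullet> u)^2 = a^2 * (e2 \<bullet> e2)" using u by (simp add: Qf_def power_mult_distrib power2_eq_square algebra_simps) metis
  hence k2: "(e2 \<bullet> u)^2 = e2 \<bullet> e2" using a0 by simp
  define k where "k = e2 \<bullet> u"
  have "(e2 - k *\<^sub>R u) \<bullet> (e2 - k *\<^sub>R u) = 0" using k2 u(1)
    by (simp add: k_def inner_diff inner_commute power2_eq_square)
  hence e2k: "e2 = k *\<^sub>R u" by simp
  have ee: "e \<bullet> e < a^2" using assms(1) a0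
    by (metis norm_ge_zero power2_norm_eq_inner power_strict_mono zero_less_numeral)
  define b where "b = sqrt (a^2 - e \<bullet> e)"
  have b2: "b^2 = a^2 - e \<bullet> e" using ee by (simp add: b_def)
  have ew: "e \<bullet> w = 0" using u(2) w(2)
    by (metis inner_commute inner_scaleR_right mult_zero_right)
  have "Qf a e (b *\<^sub>R w) = a^2*(a^2 - e \<bullet> e)" using w ew b2 by (simp add: Qf_def power_mult_distrib power2_eq_square)
  hence "Qf a e2 (b *\<^sub>R w) = a^2*(a^2 - e2 \<bullet> e2)" using Q by blast
  moreover have "e2 \<bullet> w = 0" using e2k w(2) by (simp add: inner_commute)
  ultimately have "a^2 * b^2 = a^2*(a^2 - k^2)" using w e2k u(1)
    by (simp add: Qf_def power_mult_distrib power2_eq_square inner_commute)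
  hence "b^2 = a^2 - k^2" using a0 by simp
  hence "k^2 = (e \<bullet> u)^2" using b2 u(3) by simp
  hence "k = e \<bullet> u \<or> k = - (e \<bullet> u)" by (simp add: power2_eq_iff)
  thus ?thesis using e2k u(2) by (metis scaleR_minus_left)
qed

lemma to_rep:
  fixes F1 F2 :: "real^2"
  assumes "dist F1 F2 < l"
  shows "\<exists>c e a. norm e < a \<and> F1 = c - e \<and> F2 = c + e \<and> l = 2*a"
proof -
  define c where "c = (1/2) *\<^sub>R (F1 + F2)"
  define e where "e = (1/2) *\<^sub>R (F2 - F1)"
  have "F1 = c - e" "F2 = c + e" unfolding c_def e_def vec_eq_iff by (auto simp: field_simps)
  moreover have "norm e < l/2" using assms by (simp add: e_def dist_norm norm_minus_commute)
  ultimately show ?thesis by (intro exI[of _ c] exI[of _ e] exI[of _ "l/2"]) auto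
qed

lemma ell_sym: "ellipse F1 F2 l = ellipse F2 F1 l"
  by (auto simp: ellipse_def)

lemma U_rep:
  assumes "norm e < a" "dist F1 F2 < l" and S: "ellipse (c-e) (c+e) (2*a) = ellipse F1 F2 l"
  shows "l = 2*a \<and> ((F1 = c-e \<and> F2 = c+e) \<or> (F1 = c+e \<and> F2 = c-e))"
proof -
  obtain c2 e2 a2 where r: "norm e2 < a2" "F1 = c2 - e2" "F2 = c2 + e2" "l = 2*a2"
    using to_rep[OF assms(2)] by blast
  have S2: "ellipse (c-e) (c+e) (2*a) = ellipse (c2-e2) (c2+e2) (2*a2)" using S r by simp
  have "a \<le> a2" by (rule same_a[OF assms(1) r(1) S2])
  moreover have "a2 \<le> a" by (rule same_a[OF r(1) assms(1) S2[symmetric]])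
  ultimately have aa: "a2 = a" by simp
  have S3: "ellipse (c-e) (c+e) (2*a) = ellipse (c2-e2) (c2+e2) (2*a)" using S2 aa by simp
  have r1: "norm e2 < a" using r(1) aa by simp
  have cc: "c2 = c" by (rule same_c[OF assms(1) r1 S3])
  have S4: "ellipse (c-e) (c+e) (2*a) = ellipse (c-e2) (c+e2) (2*a)" using S3 cc by simp
  have "e2 = e \<or> e2 = -e"
  proof (cases "e = 0")
    case False
    show ?thesis by (rule same_e[OF assms(1) r1 False S4])
  next
    case True
    show ?thesis
    proof (rule ccontr)
      assume "\<not> ?thesis"
      hence "e2 \<noteq> 0" using True by auto
      from same_e[OF r1 assms(1) this S4[symmetric]] True \<open>\<not> ?thesis\<close> show False by auto
    qed
  qed
  thus ?thesis using r aa cc by (auto simp: algebra_simps)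
qed

lemma dd:
  fixes c e :: "real^2"
  assumes "norm e < a" shows "dist (c-e) (c+e) < 2*a"
proof -
  have "(c - e) - (c + e) = -(2 *\<^sub>R e)" by (simp add: vec_eq_iff)
  hence "dist (c-e) (c+e) = 2 * norm e" by (simp add: dist_norm)
  thus ?thesis using assms by simp
qed

lemma major_rep:
  assumes "norm e < a"
  shows "major_axis_length (ellipse (c-e) (c+e) (2*a)) = 2*a"
  unfolding major_axis_length_def
proof (rule the_equality)
  show "\<exists>F1 F2. dist F1 F2 < 2*a \<and> ellipse (c-e) (c+e) (2*a) = ellipse F1 F2 (2*a)"
    apply (rule exI[of _ "c-e"], rule exI[of _ "c+e"]) using dd[OF assms] by simp
  fix l assume "\<exists>F1 F2. dist F1 F2 < l \<and> ellipse (c-e) (c+e) (2*a) = ellipse F1 F2 l"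
  thus "l = 2*a" using U_rep[OF assms] by blast
qed

lemma focus_rep:
  assumes "norm e < a"
  shows "is_focus (ellipse (c-e) (c+e) (2*a)) F \<longleftrightarrow> F = c - e \<or> F = c + e"
proof
  assume "is_focus (ellipse (c-e) (c+e) (2*a)) F"
  then obtain F' l where "dist F F' < l" "ellipse (c-e) (c+e) (2*a) = ellipse F F' l"
    unfolding is_focus_def by blast
  thus "F = c - e \<or> F = c + e" using U_rep[OF assms] by blast
next
  have d: "dist (c-e) (c+e) < 2*a" "dist (c+e) (c-e) < 2*a" using dd[OF assms] by (simp_all add: dist_commute)
  assume "F = c - e \<or> F = c + e"
  thus "is_focus (ellipse (c-e) (c+e) (2*a)) F"
    unfolding is_focus_def using d ell_sym by blast
qed

lemma ellipse_rep:
  assumes "is_ellipse S"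
  shows "\<exists>c e a. norm e < a \<and> S = ellipse (c-e) (c+e) (2*a)"
  using assms to_rep unfolding is_ellipse_def by metis

lemma qform:
  fixes pp rr ww :: real
  assumes pp: "pp > 0" and dt: "pp*ww - rr^2 > 0"
  shows "\<exists>e' a'. norm e' < a' \<and> a'^2*(a'^2 - e' \<bullet> e') = 1/(pp*ww - rr^2) \<and>
      (\<forall>z::real^2. Qf a' e' z = (pp*(z$1)^2 + 2*rr*(z$1)*(z$2) + ww*(z$2)^2)/(pp*ww - rr^2))"
proof -
  define dt where "dt = pp*ww - rr^2"
  define D where "D = sqrt ((pp-ww)^2 + 4*rr^2)"
  define l1 where "l1 = (pp+ww-D)/2"
  define l2 where "l2 = (pp+ww+D)/2"
  have d0: "dt > 0" using dt by (simp add: dt_def)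
  have D0: "D \<ge> 0" by (simp add: D_def)
  have D2: "D^2 = (pp-ww)^2 + 4*rr^2" by (simp add: D_def)
  have s0: "ww > 0" using pp dt by (metis diff_gt_0_iff_gt mult_pos_pos zero_le_power2 le_less_trans not_less mult_le_0_iff less_le)
  have prod: "l1 * l2 = dt" unfolding l1_def l2_def dt_def using D2 by (simp add: field_simps power2_eq_square) 
  have l2p: "l2 > 0" using D0 pp s0 by (simp add: l2_def)
  have l1p: "l1 > 0" using prod l2p d0 by (metis zero_less_mult_pos2)
  have Dge: "\<bar>pp - ww\<bar> \<le> D" using D2 D0 by (metis abs_le_square_iff abs_of_nonneg le_add_same_cancel1 zero_le_power2 mult_nonneg_nonneg zero_le_numeral power2_abs)
  have lp: "l2 - pp \<ge> 0" "l2 - ww \<ge> 0" using Dge by (auto simp: l2_def abs_le_iff)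
  have lr: "(l2 - pp)*(l2 - ww) = rr^2" unfolding l2_def using D2 by (simp add: field_simps power2_eq_square)
  define e1 where "e1 = sqrt ((l2 - pp)/dt)"
  define e2 where "e2 = (if rr \<ge> 0 then -1 else 1) * sqrt ((l2 - ww)/dt)"
  define al where "al = l2/dt"
  have e1s: "e1^2 = (l2-pp)/dt" using lp d0 by (simp add: e1_def)
  have e2s: "e2^2 = (l2-ww)/dt" using lp d0 by (simp add: e2_def power_mult_distrib)
  have e12: "e1*e2 = - rr/dt"
  proof -
    have "e1*e2 = (if rr \<ge> 0 then -1 else 1) * sqrt (((l2-pp)/dt) * ((l2-ww)/dt))" unfolding e1_def e2_def real_sqrt_mult by (simp only: mult_ac)
    also have "((l2-pp)/dt) * ((l2-ww)/dt) = (rr/dt)^2" using lr by (simp add: field_simps power2_eq_square)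
    also have "(if rr \<ge> 0 then -1 else 1) * sqrt ((rr/dt)^2) = - rr/dt" using d0 by (simp add: abs_if divide_less_0_iff)
    finally show ?thesis .
  qed
  define ev where "ev = (vector [e1, e2] :: real^2)"
  have eve: "ev \<bullet> ev = e1^2 + e2^2" by (simp add: ev_def inner2 power2_eq_square)
  have al0: "al > 0" using l2p d0 by (simp add: al_def)
  have am: "al - ev \<bullet> ev = l1/dt" using eve e1s e2s d0
    unfolding al_def l1_def l2_def by (simp add: field_simps)
  have "l1/dt > 0" using l1p d0 by simp
  hence lt: "ev \<bullet> ev < al" using am by linarith
  have K: "(sqrt al)^2*((sqrt al)^2 - ev \<bullet> ev) = 1/dt" using al0 am prod d0
    by (simp add: al_def field_simps)
  have nl: "norm ev < sqrt al" using lt by (simp add: norm_eq_sqrt_inner)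
  have Qz: "Qf (sqrt al) ev z = (pp*(z$1)^2 + 2*rr*(z$1)*(z$2) + ww*(z$2)^2)/dt" for z :: "real^2"
  proof -
    have "Qf (sqrt al) ev z = (al - e1^2)*(z$1)^2 - 2*(e1*e2)*(z$1)*(z$2) + (al - e2^2)*(z$2)^2"
      using al0 by (simp add: Qf_def ev_def inner2 power2_eq_square algebra_simps)
    also have "\<dots> = (pp*(z$1)^2 + 2*rr*(z$1)*(z$2) + ww*(z$2)^2)/dt"
      unfolding e1s e2s e12 al_def using d0 by (simp add: field_simps)
    finally show ?thesis .
  qed
  show ?thesis using nl K Qz unfolding dt_def by blast
qed

lemma Qpos:
  assumes "norm e < a" "y \<noteq> 0"
  shows "Qf a e y > 0"
proof -
  have a0: "a > 0" using assms(1) norm_ge_zero[of e] by linarith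
  have "\<bar>e \<bullet> y\<bar> \<le> norm e * norm y" by (rule Cauchy_Schwarz_ineq2)
  hence "(e \<bullet> y)^2 \<le> (norm e * norm y)^2" by (metis abs_ge_zero power2_abs power_mono)
  hence cs: "(e \<bullet> y)^2 \<le> (e \<bullet> e) * (y \<bullet> y)" by (simp add: power_mult_distrib power2_norm_eq_inner)
  have ee: "e \<bullet> e < a^2" using assms(1) a0
    by (metis norm_ge_zero power2_norm_eq_inner power_strict_mono zero_less_numeral)
  have yy: "y \<bullet> y > 0" using assms(2) by simp
  have "(e \<bullet> e) * (y \<bullet> y) < a^2 * (y \<bullet> y)" using ee yy by simp
  thus ?thesis using cs by (simp add: Qf_def)
qed

lemma decomp2: "(z::real^2) = z$1 *\<^sub>R axis 1 1 + z$2 *\<^sub>R axis 2 1"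
  by (simp add: vec_eq_iff forall_2 axis_def)

lemma img_rep:
  fixes f :: "real^2 \<Rightarrow> real^2"
  assumes ne: "norm e < a" and lf: "linear f" and bf: "bij f"
  shows "\<exists>e' a'. norm e' < a' \<and>
     (\<lambda>x. f x + b) ` ellipse (c-e) (c+e) (2*a) = ellipse ((f c + b) - e') ((f c + b) + e') (2*a') \<and>
     (\<forall>y. Qf a' e' (f y) * (a^2*(a^2 - e \<bullet> e)) = Qf a e y * (a'^2*(a'^2 - e' \<bullet> e')))"
proof -
  define h where "h = inv f"
  have injf: "inj f" using bf by (simp add: bij_def)
  have lh: "linear h" unfolding h_def by (rule inj_linear_imp_inv_linear[OF lf injf])
  have hf: "h (f x) = x" for x unfolding h_def using injf by simp
  have fh: "f (h z) = z" for z unfolding h_def using bf by (simp add: bij_def surj_f_inv_f)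
  have a0: "a > 0" using ne norm_ge_zero[of e] by linarith
  have ee: "e \<bullet> e < a^2" using ne a0
    by (metis norm_ge_zero power2_norm_eq_inner power_strict_mono zero_less_numeral)
  define K where "K = a^2*(a^2 - e \<bullet> e)"
  have K0: "K > 0" using ee a0 by (simp add: K_def)
  define u where "u = h (axis 1 1)"
  define v where "v = h (axis 2 1)"
  define B where "B = a^2*(u \<bullet> v) - (e \<bullet> u)*(e \<bullet> v)"
  have hz: "h z = z$1 *\<^sub>R u + z$2 *\<^sub>R v" for z :: "real^2"
    by (subst decomp2) (simp add: u_def v_def linear_add[OF lh] linear_scale[OF lh])
  have Qexp: "Qf a e (h z) = (z$1)^2 * Qf a e u + 2*(z$1)*(z$2)*B + (z$2)^2 * Qf a e v" for z :: "real^2"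
    unfolding hz by (simp add: Qf_def B_def inner_add inner_commute power2_eq_square algebra_simps)
  define pp where "pp = Qf a e u / K"
  define rr where "rr = B / K"
  define ww where "ww = Qf a e v / K"
  have R: "Qf a e (h z) / K = pp*(z$1)^2 + 2*rr*(z$1)*(z$2) + ww*(z$2)^2" for z :: "real^2"
    unfolding Qexp pp_def rr_def ww_def using K0 by (simp add: field_simps)
  have hnz: "h z \<noteq> 0" if "z \<noteq> 0" for z :: "real^2"
    using that fh[of z] linear_0[OF lf] by metis
  have Rpos: "pp*(z$1)^2 + 2*rr*(z$1)*(z$2) + ww*(z$2)^2 > 0" if "z \<noteq> 0" for z :: "real^2"
    using R[of z] Qpos[OF ne hnz[OF that]] K0 by (metis divide_pos_pos)
  have "axis 1 1 \<noteq> (0::real^2)" by (simp add: axis_eq_0_iff)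
  from Rpos[OF this] have pp0: "pp > 0" by (simp add: axis_def)
  have "vector [rr, -pp] \<noteq> (0::real^2)" using pp0 by (simp add: vec_eq_iff forall_2)
  from Rpos[OF this] have "pp*(pp*ww - rr^2) > 0" by (simp add: power2_eq_square algebra_simps)
  hence dt: "pp*ww - rr^2 > 0" using pp0 by (simp add: zero_less_mult_iff)
  obtain e' a' where ea: "norm e' < a'" "a'^2*(a'^2 - e' \<bullet> e') = 1/(pp*ww - rr^2)"
      "\<And>z::real^2. Qf a' e' z = (pp*(z$1)^2 + 2*rr*(z$1)*(z$2) + ww*(z$2)^2)/(pp*ww - rr^2)"
    using qform[OF pp0 dt] by blast
  have Q': "Qf a' e' z = Qf a e (h z) / K * (a'^2*(a'^2 - e' \<bullet> e'))" for z :: "real^2"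
    using ea(2) ea(3)[of z] R[of z] by simp
  have rel: "Qf a' e' (f y) * K = Qf a e y * (a'^2*(a'^2 - e' \<bullet> e'))" for y
    using Q'[of "f y"] hf[of y] K0 by simp
  have K'0: "a'^2*(a'^2 - e' \<bullet> e') > 0" using ea(2) dt by simp
  define c' where "c' = f c + b"
  have memE: "x \<in> ellipse (c-e) (c+e) (2*a) \<longleftrightarrow> Qf a e (x - c) = K" for x
    using EQ[OF ne] by (simp add: K_def)
  have memE': "y \<in> ellipse (c'-e') (c'+e') (2*a') \<longleftrightarrow> Qf a e (h (y - c')) = K" for y
  proof -
    define K' where "K' = a'^2*(a'^2 - e' \<bullet> e')"
    have "y \<in> ellipse (c'-e') (c'+e') (2*a') \<longleftrightarrow> Qf a e (h (y - c')) / K * K' = 1 * K'"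
      using EQ[OF ea(1), of y c'] Q'[of "y - c'"] by (simp add: K'_def)
    also have "\<dots> \<longleftrightarrow> Qf a e (h (y - c')) / K = 1" using K'0 unfolding K'_def by (rule mult_right_cancel[OF less_imp_neq[symmetric]])
    also have "\<dots> \<longleftrightarrow> Qf a e (h (y - c')) = K" using K0 by (metis divide_self less_irrefl nonzero_mult_div_cancel_left mult.right_neutral divide_eq_eq)
    finally show ?thesis .
  qed
  have "(\<lambda>x. f x + b) ` ellipse (c-e) (c+e) (2*a) = ellipse (c'-e') (c'+e') (2*a')"
  proof (rule set_eqI, rule iffI)
    fix y assume "y \<in> (\<lambda>x. f x + b) ` ellipse (c-e) (c+e) (2*a)"
    then obtain x where x: "x \<in> ellipse (c-e) (c+e) (2*a)" "y = f x + b" by blast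
    have "h (y - c') = x - c" using x(2) hf[of "x - c"] by (simp add: c'_def linear_diff[OF lf])
    thus "y \<in> ellipse (c'-e') (c'+e') (2*a')" using memE'[of y] memE[of x] x(1) by simp
  next
    fix y assume y: "y \<in> ellipse (c'-e') (c'+e') (2*a')"
    define x where "x = c + h (y - c')"
    have "x \<in> ellipse (c-e) (c+e) (2*a)" using memE[of x] memE'[of y] y by (simp add: x_def)
    moreover have "y = f x + b" using fh[of "y - c'"] by (simp add: x_def c'_def linear_add[OF lf])
    ultimately show "y \<in> (\<lambda>x. f x + b) ` ellipse (c-e) (c+e) (2*a)" by blast
  qed
  thus ?thesis using ea(1) rel unfolding c'_def K_def by blast
qed



lemma Qline: "Qf a e (z0 + t *\<^sub>R w) = Qf a e z0 + 2*t*(a^2*(z0 \<bullet> w) - (e \<bullet> z0)*(e \<bullet> w)) + t^2 * Qf a e w"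
  by (simp add: Qf_def inner_add inner_commute power2_eq_square algebra_simps)

lemma vieta:
  fixes A B C t1 t2 :: real
  assumes "A*t1^2 + 2*B*t1 + C = 0" "A*t2^2 + 2*B*t2 + C = 0" "t1 \<noteq> t2"
  shows "A*(t1+t2) = -2*B" "A*t1*t2 = C" "(t1-t2)^2*A^2 = 4*B^2 - 4*A*C"
proof -
  have "(t1 - t2)*(A*(t1+t2) + 2*B) = 0" using assms(1,2) by (simp add: algebra_simps power2_eq_square)
  thus s: "A*(t1+t2) = -2*B" using assms(3) by simp
  have c1: "C = -(A*t1^2) - 2*B*t1" using assms(1) by linarith
  have c2: "2*B*t1 = -(A*(t1+t2))*t1" using s by simp
  show p: "A*t1*t2 = C" unfolding c1 c2 by (simp add: algebra_simps power2_eq_square)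
  show "(t1-t2)^2*A^2 = 4*B^2 - 4*A*C"
  proof -
    have "(t1-t2)^2*A^2 = (A*(t1+t2))^2 - 4*A*(A*t1*t2)" by (simp add: algebra_simps power2_eq_square)
    thus ?thesis using s p by (simp add: power2_eq_square)
  qed
qed

lemma RD:
  assumes ne: "norm e < a" and w: "w \<noteq> 0" and t: "t1 \<noteq> t2"
    and r1: "Qf a e (z0 + t1 *\<^sub>R w) = a^2*(a^2 - e \<bullet> e)"
    and r2: "Qf a e (z0 + t2 *\<^sub>R w) = a^2*(a^2 - e \<bullet> e)"
  shows "(t1-t2)^2 * (Qf a e w)^2 = 4*(a^2*(a^2 - e \<bullet> e))*(a^2*(w \<bullet> w) - (e \<bullet> w)^2 - (cr w z0)^2)"
proof -
  define K where "K = a^2*(a^2 - e \<bullet> e)"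
  define B where "B = a^2*(z0 \<bullet> w) - (e \<bullet> z0)*(e \<bullet> w)"
  have "Qf a e w * t1^2 + 2*B*t1 + (Qf a e z0 - K) = 0" using r1 unfolding Qline B_def K_def by (simp add: algebra_simps)
  moreover have "Qf a e w * t2^2 + 2*B*t2 + (Qf a e z0 - K) = 0" using r2 unfolding Qline B_def K_def by (simp add: algebra_simps)
  ultimately have "(t1-t2)^2*(Qf a e w)^2 = 4*B^2 - 4*Qf a e w*(Qf a e z0 - K)" using vieta(3) t by blast
  also have "\<dots> = 4*(B^2 - Qf a e w * Qf a e z0) + 4*K*Qf a e w" by (simp add: algebra_simps)
  also have "B^2 - Qf a e w * Qf a e z0 = -(K*(cr w z0)^2)" unfolding B_def K_def by (rule gram)
  finally show ?thesis by (simp add: K_def Qf_def algebra_simps)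
qed

lemma roots_ex:
  fixes A B C :: real
  assumes "A > 0" "C < 0"
  shows "\<exists>t1 t2. t1 < 0 \<and> 0 < t2 \<and> A*t1^2 + 2*B*t1 + C = 0 \<and> A*t2^2 + 2*B*t2 + C = 0"
proof -
  define D where "D = B^2 - A*C"
  have D0: "D > B^2" using assms by (simp add: D_def mult_pos_neg)
  have sD: "sqrt D > \<bar>B\<bar>" using D0 by (metis real_sqrt_abs real_sqrt_less_mono)
  have "D \<ge> 0" using D0 zero_le_power2[of B] by linarith
  hence sD2: "(sqrt D)^2 = D" by simp
  define t1 where "t1 = (-B - sqrt D)/A"
  define t2 where "t2 = (-B + sqrt D)/A"
  have "t1 < 0" using sD assms(1) by (simp add: t1_def divide_less_0_iff abs_less_iff)
  moreover have "t2 > 0" using sD assms(1) by (simp add: t2_def abs_less_iff)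
  moreover have "A*t1^2 + 2*B*t1 + C = 0" using assms(1) sD2 unfolding t1_def D_def
    by (simp add: field_simps power2_eq_square)
  moreover have "A*t2^2 + 2*B*t2 + C = 0" using assms(1) sD2 unfolding t2_def D_def
    by (simp add: field_simps power2_eq_square)
  ultimately show ?thesis by blast
qed

lemma par:
  fixes w y :: "real^2"
  assumes "w \<noteq> 0" "cr w y = 0"
  shows "y = ((y \<bullet> w)/(w \<bullet> w)) *\<^sub>R w"
proof -
  have ww: "w \<bullet> w \<noteq> 0" using assms(1) by simp
  have "(w \<bullet> w) *\<^sub>R y = (y \<bullet> w) *\<^sub>R w"
    using assms(2) by (simp add: vec_eq_iff forall_2 inner2 cr_def algebra_simps)
  hence "y = (1/(w \<bullet> w)) *\<^sub>R ((y \<bullet> w) *\<^sub>R w)" using ww by (metis scaleR_scaleR divide_self_if scaleR_one mult.commute divide_inverse_commute)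
  thus ?thesis by simp
qed

lemma alg0:
  fixes T Q' Qd K K' S S' :: real
  assumes "K > 0" "K' > 0" "T*Q'^2 = 4*K'*S'" "T*Qd^2 = 4*K*S" "Q'*K = Qd*K'"
  shows "S*K' = S'*K"
proof -
  have "T*Q'^2*K^2 = T*Qd^2*K'^2"
  proof -
    have "T*Q'^2*K^2 = T*(Q'*K)^2" by (simp add: power_mult_distrib)
    also have "\<dots> = T*(Qd*K')^2" using assms(5) by simp
    finally show ?thesis by (simp add: power_mult_distrib)
  qed
  hence "4*K'*S'*K^2 = 4*K*S*K'^2" using assms(3,4) by simp
  hence "(K*K') * (S'*K) = (K*K') * (S*K')" by (simp add: power2_eq_square algebra_simps)
  thus ?thesis using assms(1,2) by simp
qed



lemma cr_neg: "cr w (-y) = - cr w y" by (simp add: cr_def)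
lemma cr_diff: "cr w (y - z) = cr w y - cr w z" by (simp add: cr_def algebra_simps)
lemma cr_scale: "cr w (k *\<^sub>R y) = k * cr w y" by (simp add: cr_def algebra_simps)
lemma cr_self: "cr w w = 0" by (simp add: cr_def algebra_simps)

lemma focal_S:
  assumes "z0 = e \<or> z0 = -e"
  shows "a^2*(w \<bullet> w) - (e \<bullet> w)^2 - (cr w z0)^2 = (a^2 - e \<bullet> e)*(w \<bullet> w)"
proof -
  have "(cr w z0)^2 = (cr w e)^2" using assms by (auto simp: cr_neg)
  thus ?thesis using lagr[of e w] by (simp add: algebra_simps)
qed

lemma seg_pt:
  fixes u v :: "real^2"
  assumes "0 \<le> s" "s \<le> 1"
  shows "(1 - s) *\<^sub>R u + s *\<^sub>R v \<in> closed_segment u v"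
  using assms by (auto simp: in_segment)

theorem proposition6:
  fixes E :: "(real^2) set" and p q :: "real^2" and g :: "real^2 \<Rightarrow> real^2"
  assumes "is_ellipse E"
    and "is_chord E p q"
    and "affine_bijection g"
  defines "P1 \<equiv> (\<forall>u v F. is_chord E u v \<and> (\<exists>t. v - u = t *\<^sub>R (q - p))
                      \<and> is_focus E F \<and> F \<in> closed_segment u v
                  \<longrightarrow> (\<exists>F'. is_focus (g ` E) F' \<and> F' \<in> g ` closed_segment u v))"
    and "P2 \<equiv> dist (g p) (g q) = dist p q"
    and "P3 \<equiv> major_axis_length (g ` E) = major_axis_length E"
  shows "(P1 \<and> P2 \<longrightarrow> P3) \<and> (P1 \<and> P3 \<longrightarrow> P2) \<and> (P2 \<and> P3 \<longrightarrow> P1)"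
proof -
  obtain c e a where ne: "norm e < a" and Edef: "E = ellipse (c-e) (c+e) (2*a)"
    using ellipse_rep[OF assms(1)] by blast
  obtain f b0 where lf: "linear f" and bf: "bij f" and gdef: "g = (\<lambda>x. f x + b0)"
    using assms(3) unfolding affine_bijection_def by blast
  obtain e' a' where ne': "norm e' < a'"
      and gE: "g ` E = ellipse ((f c + b0) - e') ((f c + b0) + e') (2*a')"
      and rel: "\<And>y. Qf a' e' (f y) * (a^2*(a^2 - e \<bullet> e)) = Qf a e y * (a'^2*(a'^2 - e' \<bullet> e'))"
    using img_rep[OF ne lf bf, of b0 c] unfolding Edef gdef by blast
  define c' where "c' = f c + b0"
  define d where "d = q - p"
  define bb where "bb = a^2 - e \<bullet> e"
  define bb' where "bb' = a'^2 - e' \<bullet> e'"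
  define K where "K = a^2 * bb"
  define K' where "K' = a'^2 * bb'"
  have a0: "a > 0" using ne norm_ge_zero[of e] by linarith
  have a0': "a' > 0" using ne' norm_ge_zero[of e'] by linarith
  have bb0: "bb > 0" unfolding bb_def using ne a0
    by (metis diff_gt_0_iff_gt norm_ge_zero power2_norm_eq_inner power_strict_mono zero_less_numeral)
  have bb0': "bb' > 0" unfolding bb'_def using ne' a0'
    by (metis diff_gt_0_iff_gt norm_ge_zero power2_norm_eq_inner power_strict_mono zero_less_numeral)
  have K0: "K > 0" using a0 bb0 by (simp add: K_def)
  have K0': "K' > 0" using a0' bb0' by (simp add: K'_def)
  have injf: "inj f" using bf by (simp add: bij_def)
  have pq: "p \<noteq> q" using assms(2) by (simp add: is_chord_def)
  have d0: "d \<noteq> 0" using pq by (simp add: d_def)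
  have fd0: "f d \<noteq> 0" using d0 injf linear_0[OF lf] by (metis injD)
  have gE': "g ` E = ellipse (c' - e') (c' + e') (2*a')" using gE by (simp add: c'_def)
  have memE: "x \<in> E \<longleftrightarrow> Qf a e (x - c) = K" for x
    using EQ[OF ne] by (simp add: Edef K_def bb_def)
  have memE': "y \<in> g ` E \<longleftrightarrow> Qf a' e' (y - c') = K'" for y
    using EQ[OF ne'] by (simp add: gE' K'_def bb'_def)
  have gx: "g x - c' = f (x - c)" for x by (simp add: gdef c'_def linear_diff[OF lf])
  have focE: "is_focus E F \<longleftrightarrow> F = c - e \<or> F = c + e" for F
    using focus_rep[OF ne] by (simp add: Edef)
  have focE': "is_focus (g ` E) F \<longleftrightarrow> F = c' - e' \<or> F = c' + e'" for F
    using focus_rep[OF ne'] by (simp add: gE')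
  have P3eq: "P3 \<longleftrightarrow> a' = a"
  proof -
    have "major_axis_length (g ` E) = 2*a'" unfolding gE' by (rule major_rep[OF ne'])
    moreover have "major_axis_length E = 2*a" unfolding Edef by (rule major_rep[OF ne])
    ultimately show ?thesis by (simp add: P3_def)
  qed
  have P2eq: "P2 \<longleftrightarrow> norm (f d) = norm d"
  proof -
    have "dist (g p) (g q) = norm (f d)"
      by (simp add: gdef d_def dist_norm linear_diff[OF lf] norm_minus_commute)
    thus ?thesis by (simp add: P2_def d_def dist_norm norm_minus_commute)
  qed
  define Qd where "Qd = Qf a e d"
  define Q' where "Q' = Qf a' e' (f d)"
  have Qd0: "Qd > 0" using Qpos[OF ne d0] by (simp add: Qd_def)
  have Q'0: "Q' > 0" using Qpos[OF ne' fd0] by (simp add: Q'_def)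
  have QQ: "Q' * K = Qd * K'" using rel[of d] by (simp add: Q'_def Qd_def K_def K'_def bb_def bb'_def)
  have key: "P1 \<longleftrightarrow> a'^2 * (d \<bullet> d) = a^2 * (f d \<bullet> f d)"
  proof
    assume P1: P1
    define B0 where "B0 = a^2*(e \<bullet> d) - (e \<bullet> e)*(e \<bullet> d)"
    have C0: "Qf a e e - K < 0"
    proof -
      have "Qf a e e - K = -(bb^2)" by (simp add: Qf_def K_def bb_def power2_eq_square algebra_simps)
      thus ?thesis using bb0 by simp
    qed
    obtain t1 t2 where t: "t1 < 0" "0 < t2" "Qd*t1^2 + 2*B0*t1 + (Qf a e e - K) = 0"
        "Qd*t2^2 + 2*B0*t2 + (Qf a e e - K) = 0"
      using roots_ex[OF Qd0 C0] by blast
    have onE: "Qf a e (e + t *\<^sub>R d) = K" if "Qd*t^2 + 2*B0*t + (Qf a e e - K) = 0" for t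
      using that unfolding Qline Qd_def B0_def by (simp add: algebra_simps)
    define u where "u = c + (e + t1 *\<^sub>R d)"
    define v where "v = c + (e + t2 *\<^sub>R d)"
    have uE: "u \<in> E" using memE onE[OF t(3)] by (simp add: u_def)
    have vE: "v \<in> E" using memE onE[OF t(4)] by (simp add: v_def)
    have t12: "t1 \<noteq> t2" using t by simp
    have uv: "u \<noteq> v" using t12 d0 by (simp add: u_def v_def)
    have vu: "v - u = (t2 - t1) *\<^sub>R (q - p)" by (simp add: u_def v_def d_def[symmetric] scaleR_diff_left)
    have Fs: "c + e \<in> closed_segment u v"
    proof -
      define s where "s = -t1/(t2-t1)"
      have s01: "0 \<le> s" "s \<le> 1" using t by (simp_all add: s_def divide_simps)
      have "(1-s) *\<^sub>R u + s *\<^sub>R v = c + e + (t1 + s*(t2-t1)) *\<^sub>R d"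
        by (simp add: u_def v_def vec_eq_iff forall_2 algebra_simps)
      moreover have "t1 + s*(t2-t1) = 0" using t12 by (simp add: s_def field_simps)
      ultimately have "(1-s)*\<^sub>R u + s*\<^sub>R v = c + e" by simp
      thus ?thesis using seg_pt[OF s01] by metis
    qed
    have "is_chord E u v \<and> (\<exists>t. v - u = t *\<^sub>R (q - p)) \<and> is_focus E (c+e) \<and> (c+e) \<in> closed_segment u v"
      using uE vE uv vu Fs focE unfolding is_chord_def by blast
    then obtain F' where F': "is_focus (g ` E) F'" "F' \<in> g ` closed_segment u v"
      using P1 unfolding P1_def by blast
    obtain x where x: "x \<in> closed_segment u v" "F' = g x" using F'(2) by blast
    obtain s where s: "0 \<le> s" "s \<le> 1" "x = (1-s)*\<^sub>R u + s *\<^sub>R v" using x(1) by (auto simp: in_segment)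
    define t0 where "t0 = (1-s)*t1 + s*t2"
    have xc: "x - c = e + t0 *\<^sub>R d" by (simp add: s(3) u_def v_def t0_def vec_eq_iff forall_2 algebra_simps)
    define z0 where "z0 = F' - c'"
    have z0e: "z0 = e' \<or> z0 = -e'" using F'(1) focE' by (auto simp: z0_def)
    have z0f: "z0 = f e + t0 *\<^sub>R f d" using gx[of x] xc x(2)
      by (simp add: z0_def linear_add[OF lf] linear_scale[OF lf])
    have gu: "g u - c' = z0 + (t1 - t0) *\<^sub>R f d"
      unfolding gx z0f by (simp add: u_def linear_add[OF lf] linear_scale[OF lf] vec_eq_iff forall_2 algebra_simps)
    have gv: "g v - c' = z0 + (t2 - t0) *\<^sub>R f d"
      unfolding gx z0f by (simp add: v_def linear_add[OF lf] linear_scale[OF lf] vec_eq_iff forall_2 algebra_simps)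
    have r1: "Qf a' e' (z0 + (t1 - t0) *\<^sub>R f d) = a'^2*(a'^2 - e' \<bullet> e')"
      using memE'[of "g u"] uE gu by (simp add: K'_def bb'_def)
    have r2: "Qf a' e' (z0 + (t2 - t0) *\<^sub>R f d) = a'^2*(a'^2 - e' \<bullet> e')"
      using memE'[of "g v"] vE gv by (simp add: K'_def bb'_def)
    have "t1 - t0 \<noteq> t2 - t0" using t12 by simp
    from RD[OF ne' fd0 this r1 r2]
    have RDi: "(t1-t2)^2 * Q'^2 = 4*K'*(bb' * (f d \<bullet> f d))"
      using focal_S[OF z0e, of a' "f d"] by (simp add: Q'_def K'_def bb'_def)
    have e1: "Qf a e (e + t1 *\<^sub>R d) = a^2*(a^2 - e \<bullet> e)" using onE[OF t(3)] by (simp add: K_def bb_def)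
    have e2: "Qf a e (e + t2 *\<^sub>R d) = a^2*(a^2 - e \<bullet> e)" using onE[OF t(4)] by (simp add: K_def bb_def)
    from RD[OF ne d0 t12 e1 e2]
    have RDe: "(t1-t2)^2 * Qd^2 = 4*K*(bb * (d \<bullet> d))"
      using focal_S[of e e a d] by (simp add: Qd_def K_def bb_def)
    have "(bb*(d \<bullet> d))*K' = (bb'*(f d \<bullet> f d))*K" by (rule alg0[OF K0 K0' RDi RDe QQ])
    hence "(bb*bb')*(a'^2*(d \<bullet> d)) = (bb*bb')*(a^2*(f d \<bullet> f d))"
      unfolding K_def K'_def by (simp add: algebra_simps)
    thus "a'^2*(d \<bullet> d) = a^2*(f d \<bullet> f d)" using bb0 bb0' by simp
  next
    assume R: "a'^2*(d \<bullet> d) = a^2*(f d \<bullet> f d)"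
    show P1 unfolding P1_def
    proof (intro allI impI, elim conjE exE)
      fix u v F t
      assume ch: "is_chord E u v" and vt: "v - u = t *\<^sub>R (q - p)" and FF: "is_focus E F"
        and Fseg: "F \<in> closed_segment u v"
      have uE: "u \<in> E" "v \<in> E" "u \<noteq> v" using ch by (auto simp: is_chord_def)
      have tn0: "t \<noteq> 0" using vt uE(3) by auto
      define ph where "ph = F - c"
      have phe: "ph = e \<or> ph = -e" using FF focE by (auto simp: ph_def)
      obtain s where s: "0 \<le> s" "s \<le> 1" "F = (1-s)*\<^sub>R u + s*\<^sub>R v" using Fseg by (auto simp: in_segment)
      define t1 where "t1 = -(s*t)"
      define t2 where "t2 = (1-s)*t"
      have vv: "v = u + t *\<^sub>R d" using vt by (simp add: d_def algebra_simps)
      have uc: "u - c = ph + t1 *\<^sub>R d"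
        by (simp add: ph_def s(3) vv t1_def vec_eq_iff forall_2 algebra_simps)
      have vc: "v - c = ph + t2 *\<^sub>R d"
        by (simp add: ph_def s(3) vv t2_def vec_eq_iff forall_2 algebra_simps)
      have t12: "t1 \<noteq> t2" using tn0 by (simp add: t1_def t2_def algebra_simps)
      have e1: "Qf a e (ph + t1 *\<^sub>R d) = a^2*(a^2 - e \<bullet> e)" using memE uE(1) uc by (simp add: K_def bb_def)
      have e2: "Qf a e (ph + t2 *\<^sub>R d) = a^2*(a^2 - e \<bullet> e)" using memE uE(2) vc by (simp add: K_def bb_def)
      from RD[OF ne d0 t12 e1 e2]
      have RDe: "(t1-t2)^2 * Qd^2 = 4*K*(bb * (d \<bullet> d))"
        using focal_S[OF phe, of a d] by (simp add: Qd_def K_def bb_def)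
      have gu: "g u - c' = f ph + t1 *\<^sub>R f d" using gx[of u] uc by (simp add: linear_add[OF lf] linear_scale[OF lf])
      have gv: "g v - c' = f ph + t2 *\<^sub>R f d" using gx[of v] vc by (simp add: linear_add[OF lf] linear_scale[OF lf])
      have guE: "g u \<in> g ` E" "g v \<in> g ` E" using uE by auto
      have r1: "Qf a' e' (f ph + t1 *\<^sub>R f d) = a'^2*(a'^2 - e' \<bullet> e')"
        using memE'[of "g u"] guE gu by (simp add: K'_def bb'_def)
      have r2: "Qf a' e' (f ph + t2 *\<^sub>R f d) = a'^2*(a'^2 - e' \<bullet> e')"
        using memE'[of "g v"] guE gv by (simp add: K'_def bb'_def)
      define Y where "Y = (cr (f d) (f ph))^2"
      define S' where "S' = a'^2*(f d \<bullet> f d) - (e' \<bullet> f d)^2 - Y"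
      from RD[OF ne' fd0 t12 r1 r2]
      have RDi: "(t1-t2)^2 * Q'^2 = 4*K'*S'"
        by (simp add: Q'_def K'_def bb'_def S'_def Y_def)
      have A0: "(bb*(d \<bullet> d))*K' = S'*K" by (rule alg0[OF K0 K0' RDi RDe QQ])
      hence "bb*(a'^2*(d \<bullet> d)*bb') = bb*(S'*a^2)" unfolding K_def K'_def by (simp add: algebra_simps)
      hence "a'^2*(d \<bullet> d)*bb' = S'*a^2" using bb0 by simp
      hence "a^2*((f d \<bullet> f d)*bb') = a^2*S'" using R by (simp add: algebra_simps)
      hence "(f d \<bullet> f d)*bb' = S'" using a0 by simp
      hence "Y = (e' \<bullet> e')*(f d \<bullet> f d) - (e' \<bullet> f d)^2" unfolding S'_def bb'_def by (simp add: algebra_simps)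
      hence "(cr (f d) (f ph))^2 = (cr (f d) e')^2" using lagr[of e' "f d"] by (simp add: Y_def)
      hence "cr (f d) (f ph) = cr (f d) e' \<or> cr (f d) (f ph) = - cr (f d) e'" by (simp add: power2_eq_iff)
      then obtain z where z: "z = e' \<or> z = -e'" "cr (f d) (f ph - z) = 0"
        by (metis cr_diff cr_neg diff_self diff_minus_eq_add add.commute add_uminus_conv_diff)
      define mu where "mu = ((f ph - z) \<bullet> f d)/(f d \<bullet> f d)"
      have fz: "f ph = z + mu *\<^sub>R f d" using par[OF fd0 z(2)] by (simp add: mu_def algebra_simps)
      define B' where "B' = a'^2*(z \<bullet> f d) - (e' \<bullet> z)*(e' \<bullet> f d)"
      have rt: "Q' * (mu + ti)^2 + 2*B'*(mu + ti) + (Qf a' e' z - K') = 0"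
        if "Qf a' e' (f ph + ti *\<^sub>R f d) = a'^2*(a'^2 - e' \<bullet> e')" for ti
      proof -
        have "f ph + ti *\<^sub>R f d = z + (mu + ti) *\<^sub>R f d" using fz by (simp add: scaleR_add_left)
        hence "Qf a' e' (z + (mu + ti) *\<^sub>R f d) = a'^2*(a'^2 - e' \<bullet> e')" using that by simp
        hence "Qf a' e' z + 2*(mu+ti)*B' + (mu+ti)^2 * Q' = K'"
          unfolding Qline Q'_def B'_def K'_def bb'_def .
        thus ?thesis by (simp add: algebra_simps)
      qed
      have Cz: "Qf a' e' z - K' = -(bb'^2)" using z(1)
        by (auto simp: Qf_def K'_def bb'_def power2_eq_square algebra_simps)
      have "mu + t1 \<noteq> mu + t2" using t12 by simp
      from vieta(2)[OF rt[OF r1] rt[OF r2] this]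
      have "Q' * ((mu + t1)*(mu + t2)) = -(bb'^2)" using Cz by (simp add: mult.assoc)
      hence neg: "(mu + t1)*(mu + t2) < 0"
      proof -
        assume h: "Q' * ((mu + t1)*(mu + t2)) = -(bb'^2)"
        show ?thesis
        proof (rule ccontr)
          assume "\<not> ?thesis"
          hence "Q' * ((mu + t1)*(mu + t2)) \<ge> 0" using Q'0 by simp
          moreover have "bb'^2 > 0" using bb0' by simp
          ultimately show False using h by linarith
        qed
      qed
      define lam where "lam = (-mu - t1)/(t2 - t1)"
      have t21: "t2 - t1 = t" by (simp add: t1_def t2_def algebra_simps)
      have lam01: "0 \<le> lam \<and> lam \<le> 1"
      proof (cases "t1 < t2")
        case True
        hence "mu + t1 < 0" "0 < mu + t2" using neg by (auto simp: mult_less_0_iff)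
        thus ?thesis using True by (simp add: lam_def divide_simps)
      next
        case False
        hence F2: "t2 < t1" using t12 by simp
        hence "mu + t2 < 0" "0 < mu + t1" using neg by (auto simp: mult_less_0_iff)
        thus ?thesis using F2 by (simp add: lam_def divide_simps)
      qed
      define xx where "xx = (1-lam)*\<^sub>R u + lam*\<^sub>R v"
      have xxs: "xx \<in> closed_segment u v" using seg_pt lam01 by (simp add: xx_def)
      have "xx - c = ph + (-mu) *\<^sub>R d"
      proof -
        have "xx - c = (u - c) + (lam * t) *\<^sub>R d" by (simp add: xx_def vv vec_eq_iff forall_2 algebra_simps)
        also have "lam * t = -mu - t1" using tn0 t21 by (simp add: lam_def)
        finally show ?thesis using uc by (simp add: vec_eq_iff forall_2 algebra_simps)
      qed
      hence "g xx - c' = z" using gx[of xx] fz by (simp add: linear_diff[OF lf] linear_scale[OF lf])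
      hence gxx: "g xx = c' + z" by (simp add: algebra_simps)
      have "is_focus (g ` E) (c' + z)" using focE' z(1) by auto
      moreover have "c' + z \<in> g ` closed_segment u v" using gxx xxs by (metis image_eqI)
      ultimately show "\<exists>F'. is_focus (g ` E) F' \<and> F' \<in> g ` closed_segment u v" by blast
    qed
  qed
  have key2: "P1 \<longleftrightarrow> a' * norm d = a * norm (f d)"
  proof -
    have "a'^2 * (d \<bullet> d) = a^2 * (f d \<bullet> f d) \<longleftrightarrow> (a' * norm d)^2 = (a * norm (f d))^2"
      by (simp add: power_mult_distrib power2_norm_eq_inner)
    also have "\<dots> \<longleftrightarrow> a' * norm d = a * norm (f d)"
      using a0 a0' by (auto intro: power2_eq_imp_eq)
    finally show ?thesis using key by simp
  qed
  have nd: "norm d > 0" using d0 by simp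
  show ?thesis unfolding key2 P2eq P3eq using a0 nd by auto
qed

end
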